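(* Let $P=[0,1]$. For the online cumulative distance (CD) problem in $P$, no (possibly randomized) online algorithm achieves a competitive ratio to $OPT_C$ better than $\Omega(n)$, where $n$ is the number of points.
   Context: Distances are Euclidean; $\partial P=\{0,1\}$. An instance is $S=((s_1,d_1),\dots,(s_n,d_n))$ with $s_i<d_i$, $0=s_1\le\dots\le s_n$; point $i$ is present at time $t$ iff $s_i\le t\le d_i$; $T=\max_i d_i$. For locations $X\in P^n$, $d_{min}(t;X)=\min\{dis(X_i,\partial P),dis(X_i,X_j)\}$ over present points $i\ne j$ at time $t$, and $OPT_C(S;P)=\max_X\int_0^T d_{min}(t;X)\,dt$. In the online problem, upon arrival of each point the algorithm irrevocably chooses its location without knowing future events or $n$; the events are chosen by an adaptive adversary knowing the algorithm. The competitive ratio on $S$ is $OPT_C(S;P)/\int_0^T d_{min}(t;X)\,dt$ for the algorithm's output $X$. *)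

theory Defs
  imports "HOL-Analysis.Analysis"
begin

text \<open>An instance is a list of pairs (s_i, d_i) (0-based indices). Locations of
points are given by a function X :: nat => real (only indices < length S matter).
P = [0,1], boundary {0,1}.\<close>

type_synonym cd_instance = "(real \<times> real) list"

definition valid_instance :: "cd_instance \<Rightarrow> bool" where
  "valid_instance S \<longleftrightarrow> S \<noteq> [] \<and> fst (S ! 0) = 0 \<and> sorted (map fst S) \<and>
     (\<forall>i < length S. fst (S ! i) < snd (S ! i))"

definition present :: "cd_instance \<Rightarrow> nat \<Rightarrow> real \<Rightarrow> bool" where
  "present S i t \<longleftrightarrow> i < length S \<and> fst (S ! i) \<le> t \<and> t \<le> snd (S ! i)"

definition horizon :: "cd_instance \<Rightarrow> real" where
  "horizon S = Max (snd ` set S)"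

definition dist_bd :: "real \<Rightarrow> real" where
  "dist_bd x = min \<bar>x - 0\<bar> \<bar>x - 1\<bar>"

definition dmin :: "cd_instance \<Rightarrow> (nat \<Rightarrow> real) \<Rightarrow> real \<Rightarrow> real" where
  "dmin S X t =
    (let I = {i. present S i t} in
     if I = {} then 0
     else Min ((\<lambda>i. dist_bd (X i)) ` I \<union> {\<bar>X i - X j\<bar> | i j. i \<in> I \<and> j \<in> I \<and> i \<noteq> j}))"

definition cumulative :: "cd_instance \<Rightarrow> (nat \<Rightarrow> real) \<Rightarrow> real" where
  "cumulative S X = integral {0..horizon S} (dmin S X)"

definition OPT_C :: "cd_instance \<Rightarrow> real" where
  "OPT_C S = (SUP X \<in> {X. \<forall>i < length S. X i \<in> {0..1}}. cumulative S X)"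

text \<open>Information available to an online algorithm when point k (0-based) arrives:
the arrival times s_0..s_k and, for each earlier point j < k, its departure time
if it has departed by time s_k (d_j \<le> s_k), otherwise None.  The number n of
points is not part of this information.\<close>
type_synonym observation = "real list \<times> real option list"

definition obs :: "cd_instance \<Rightarrow> nat \<Rightarrow> observation" where
  "obs S k = (map fst (take (Suc k) S),
              map (\<lambda>j. if snd (S ! j) \<le> fst (S ! k) then Some (snd (S ! j)) else None) [0..<k])"

type_synonym online_alg = "observation \<Rightarrow> real"

definition online_alg :: "online_alg \<Rightarrow> bool" where
  "online_alg A \<longleftrightarrow> (\<forall>ob. A ob \<in> {0..1})"

text \<open>An adaptive adversary for n points: maps the algorithm's placements
(x_0,...,x_{n-1}) to an cd_instance, such that everything revealed to the algorithm at
the arrival of point k depends only on the placements x_0..x_{k-1}.\<close>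
definition adaptive_adversary :: "nat \<Rightarrow> (real list \<Rightarrow> cd_instance) \<Rightarrow> bool" where
  "adaptive_adversary n Adv \<longleftrightarrow>
     (\<forall>xs. length xs = n \<longrightarrow> length (Adv xs) = n \<and> valid_instance (Adv xs)) \<and>
     (\<forall>xs ys k. length xs = n \<longrightarrow> length ys = n \<longrightarrow> k < n \<longrightarrow>
        take k xs = take k ys \<longrightarrow> obs (Adv xs) k = obs (Adv ys) k)"

definition run :: "nat \<Rightarrow> online_alg \<Rightarrow> (real list \<Rightarrow> cd_instance) \<Rightarrow> real list \<Rightarrow> bool" where
  "run n A Adv xs \<longleftrightarrow> length xs = n \<and> (\<forall>k < n. xs ! k = A (obs (Adv xs) k))"

end

theory Submission
  imports Defs
begin

definition stepI :: "nat \<Rightarrow> nat set \<Rightarrow> real \<Rightarrow> cd_instance" where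
  "stepI n K L = map (\<lambda>k. (0, if k \<in> K then 1 + L else 1)) [0..<n]"

lemma stepI_len[simp]: "length (stepI n K L) = n"
  by (simp add: stepI_def)

lemma stepI_nth[simp]: "k < n \<Longrightarrow> stepI n K L ! k = (0, if k \<in> K then 1 + L else 1)"
  by (simp add: stepI_def)

lemma present_stepI: "present (stepI n K L) k t \<longleftrightarrow> k < n \<and> 0 \<le> t \<and> t \<le> (if k \<in> K then 1 + L else 1)"
  by (auto simp: present_def)

lemma dmin_cong: "{i. present S i t} = {i. present S i t'} \<Longrightarrow> dmin S X t = dmin S X t'"
  unfolding dmin_def by simp

lemma dmin_low: assumes "t \<in> {0..1}" "L > 0"
  shows "dmin (stepI n K L) X t = dmin (stepI n K L) X 0"
  apply (rule dmin_cong) using assms by (auto simp: present_stepI)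

lemma dmin_high: assumes "t \<in> {1<..1+L}" "L > 0"
  shows "dmin (stepI n K L) X t = dmin (stepI n K L) X (1+L)"
  apply (rule dmin_cong) using assms by (auto simp: present_stepI)

lemma horizon_stepI: assumes "k \<in> K" "k < n" "L > 0"
  shows "horizon (stepI n K L) = 1 + L"
proof -
  have "snd ` set (stepI n K L) \<subseteq> {1, 1+L}" by (auto simp: stepI_def)
  moreover have "1 + L \<in> snd ` set (stepI n K L)"
    using assms by (force simp: stepI_def)
  ultimately show ?thesis unfolding horizon_def using assms
    by (intro Max_eqI) (auto intro: finite_subset)
qed

lemma cumulative_stepI: assumes "k \<in> K" "k < n" "L > 0"
  shows "cumulative (stepI n K L) X = dmin (stepI n K L) X 0 + L * dmin (stepI n K L) X (1+L)"
proof -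
  let ?S = "stepI n K L"
  have h1: "(dmin ?S X has_integral dmin ?S X 0) {0..1}"
  proof -
    have "((\<lambda>t::real. dmin ?S X 0) has_integral dmin ?S X 0) {0..1}"
      using has_integral_const_real[of "dmin ?S X 0" "0::real" "1::real"] by simp
    then show ?thesis
      by (rule has_integral_eq[rotated]) (rule dmin_low[OF _ assms(3), symmetric], simp)
  qed
  have h2: "(dmin ?S X has_integral L * dmin ?S X (1+L)) {1..1+L}"
  proof -
    have "((\<lambda>t::real. dmin ?S X (1+L)) has_integral L * dmin ?S X (1+L)) {1..1+L}"
      using has_integral_const_real[of "dmin ?S X (1+L)" 1 "1+L"] assms by (simp add: mult.commute)
    note hh = this
    show ?thesis
      by (rule has_integral_spike_finite[of "{1}", OF _ _ hh]) (auto intro: dmin_high[OF _ assms(3)])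
  qed
  have "(dmin ?S X has_integral dmin ?S X 0 + L * dmin ?S X (1+L)) {0..1+L}"
    by (rule has_integral_combine[OF _ _ h1 h2]) (use assms in auto)
  then show ?thesis unfolding cumulative_def horizon_stepI[OF assms]
    by (rule integral_unique)
qed

lemma finite_present: "finite {i. present S i t}"
  by (rule finite_subset[of _ "{..<length S}"]) (auto simp: present_def)

lemma finite_dmin_set:
  assumes "finite I"
  shows "finite ((\<lambda>i. dist_bd (X i)) ` I \<union> {\<bar>X i - X j\<bar> | i j. i \<in> I \<and> j \<in> I \<and> i \<noteq> j})"
proof -
  have "{\<bar>X i - X j\<bar> | i j. i \<in> I \<and> j \<in> I \<and> i \<noteq> j} \<subseteq> (\<lambda>(i,j). \<bar>X i - X j\<bar>) ` (I \<times> I)"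
    by auto
  moreover have "finite ((\<lambda>(i,j). \<bar>X i - X j\<bar>) ` (I \<times> I))" using assms by simp
  ultimately show ?thesis using assms by (meson finite_UnI finite_imageI finite_subset)
qed

lemma dist_bd_nonneg: "dist_bd x \<ge> 0" by (simp add: dist_bd_def)
lemma dist_bd_le: "x \<in> {0..1} \<Longrightarrow> dist_bd x \<le> 1/2" by (auto simp: dist_bd_def min_def abs_if)

lemma dmin_nonneg: "dmin S X t \<ge> 0"
proof -
  let ?I = "{i. present S i t}"
  show ?thesis
  proof (cases "?I = {}")
    case True then show ?thesis by (simp add: dmin_def)
  next
    case False
    have "0 \<le> Min ((\<lambda>i. dist_bd (X i)) ` ?I \<union> {\<bar>X i - X j\<bar> | i j. i \<in> ?I \<and> j \<in> ?I \<and> i \<noteq> j})"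
      using False finite_dmin_set[OF finite_present, of X S t]
      by (subst Min_ge_iff) (auto simp: dist_bd_nonneg)
    then show ?thesis using False by (simp add: dmin_def Let_def)
  qed
qed

lemma dmin_le_bd: assumes "present S i t" shows "dmin S X t \<le> dist_bd (X i)"
proof -
  let ?I = "{i. present S i t}"
  have ne: "?I \<noteq> {}" using assms by auto
  have "Min ((\<lambda>i. dist_bd (X i)) ` ?I \<union> {\<bar>X i - X j\<bar> | i j. i \<in> ?I \<and> j \<in> ?I \<and> i \<noteq> j}) \<le> dist_bd (X i)"
    using assms finite_dmin_set[OF finite_present, of X S t] by (intro Min_le) auto
  then show ?thesis using ne by (auto simp: dmin_def Let_def dist_bd_nonneg)
qed

lemma dmin_le_half: assumes "\<forall>i<length S. X i \<in> {0..1}" shows "dmin S X t \<le> 1/2"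
proof (cases "{i. present S i t} = {}")
  case True then show ?thesis by (simp add: dmin_def)
next
  case False then obtain i where "present S i t" by auto
  moreover have "X i \<in> {0..1}" using assms calculation by (simp add: present_def)
  ultimately show ?thesis using dmin_le_bd[of S i t X] dist_bd_le[of "X i"] by linarith
qed

lemma dmin_le_pair: assumes "present S i t" "present S j t" "i \<noteq> j"
  shows "dmin S X t \<le> \<bar>X i - X j\<bar>"
proof -
  let ?I = "{i. present S i t}"
  have ne: "?I \<noteq> {}" using assms by auto
  have "Min ((\<lambda>i. dist_bd (X i)) ` ?I \<union> {\<bar>X i - X j\<bar> | i j. i \<in> ?I \<and> j \<in> ?I \<and> i \<noteq> j}) \<le> \<bar>X i - X j\<bar>"
    using assms finite_dmin_set[OF finite_present, of X S t] by (intro Min_le) auto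
  then show ?thesis using ne by (auto simp: dmin_def Let_def dist_bd_nonneg)
qed

lemma dmin_two: assumes "{i. present S i t} = {a, b}" "a \<noteq> b" "X a = 1/3" "X b = 2/3"
  shows "dmin S X t \<ge> 1/3"
proof -
  let ?I = "{i. present S i t}"
  have ne: "?I \<noteq> {}" using assms by auto
  have "1/3 \<le> Min ((\<lambda>i. dist_bd (X i)) ` ?I \<union> {\<bar>X i - X j\<bar> | i j. i \<in> ?I \<and> j \<in> ?I \<and> i \<noteq> j})"
  proof (subst Min_ge_iff)
    show "finite ((\<lambda>i. dist_bd (X i)) ` ?I \<union> {\<bar>X i - X j\<bar> | i j. i \<in> ?I \<and> j \<in> ?I \<and> i \<noteq> j})"
      by (rule finite_dmin_set[OF finite_present])
    show "(\<lambda>i. dist_bd (X i)) ` ?I \<union> {\<bar>X i - X j\<bar> | i j. i \<in> ?I \<and> j \<in> ?I \<and> i \<noteq> j} \<noteq> {}"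
      using ne by auto
    have d1: "dist_bd (1/3) = 1/3" "dist_bd (2/3) = 1/3" by (simp_all add: dist_bd_def)
    show "\<forall>y \<in> (\<lambda>i. dist_bd (X i)) ` ?I \<union> {\<bar>X i - X j\<bar> | i j. i \<in> ?I \<and> j \<in> ?I \<and> i \<noteq> j}. 1/3 \<le> y"
      unfolding assms(1) using assms(2) d1 by (auto simp: assms(3) assms(4))
  qed
  then show ?thesis using ne by (auto simp: dmin_def Let_def dist_bd_nonneg)
qed

lemma pigeon:
  fixes xs :: "real list"
  assumes "n \<ge> 3" "\<forall>k<n. xs ! k \<in> {0..1}"
  shows "\<exists>i j. i < n \<and> j < n \<and> i \<noteq> j \<and> \<bar>xs ! i - xs ! j\<bar> < 1 / (real n - 2)"
proof -
  define m where "m = real n - 2"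
  have m1: "m \<ge> 1" using assms(1) by (simp add: m_def)
  define f where "f i = \<lfloor>xs ! i * m\<rfloor>" for i
  have sub: "f ` {..<n} \<subseteq> {0..int n - 2}"
  proof
    fix y assume "y \<in> f ` {..<n}"
    then obtain i where i: "i < n" "y = f i" by auto
    have "0 \<le> xs ! i * m" "xs ! i * m \<le> m" using assms(2) i m1 by (auto intro: mult_left_le_one_le)
    then show "y \<in> {0..int n - 2}" unfolding i f_def m_def
      by (auto simp: le_floor_iff floor_le_iff)
  qed
  have "card (f ` {..<n}) \<le> card {0..int n - 2}" by (rule card_mono[OF _ sub]) simp
  also have "\<dots> = n - 1" using assms(1) by simp
  finally have "card (f ` {..<n}) < card {..<n}" using assms(1) by simp
  then have "\<not> inj_on f {..<n}" using pigeonhole by blast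
  then obtain i j where ij: "i < n" "j < n" "i \<noteq> j" "f i = f j"
    unfolding inj_on_def by auto
  have "\<bar>xs ! i * m - xs ! j * m\<bar> < 1"
  proof -
    have a: "of_int (f i) \<le> xs ! i * m" "xs ! i * m < of_int (f i) + 1"
      unfolding f_def by (rule of_int_floor_le, rule real_of_int_floor_add_one_gt)
    have b: "of_int (f j) \<le> xs ! j * m" "xs ! j * m < of_int (f j) + 1"
      unfolding f_def by (rule of_int_floor_le, rule real_of_int_floor_add_one_gt)
    show ?thesis using a b ij(4) by (simp add: abs_less_iff)
  qed
  then have "\<bar>xs ! i - xs ! j\<bar> * m < 1"
    using m1 by (simp add: left_diff_distrib[symmetric] abs_mult)
  then have "\<bar>xs ! i - xs ! j\<bar> < 1 / m" using m1 by (simp add: field_simps)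
  then show ?thesis using ij m_def by blast
qed

lemma map_fst_stepI: "map fst (stepI n K L) = replicate n 0"
  by (intro nth_equalityI) auto

lemma obs_stepI: assumes "k < n" "L \<ge> 0"
  shows "obs (stepI n K L) k = (replicate (Suc k) 0, replicate k None)"
proof -
  have 1: "map fst (take (Suc k) (stepI n K L)) = replicate (Suc k) 0"
    using assms by (simp add: take_map[symmetric] map_fst_stepI min_def)
  have 2: "map (\<lambda>j. if snd (stepI n K L ! j) \<le> fst (stepI n K L ! k) then Some (snd (stepI n K L ! j)) else None) [0..<k]
      = replicate k None"
    using assms by (intro nth_equalityI) auto
  show ?thesis unfolding obs_def using 1 2 by simp
qed

lemma valid_stepI: assumes "n > 0" "L \<ge> 0" shows "valid_instance (stepI n K L)"
proof -
  have "map fst (stepI n K L) = replicate n 0" by (intro nth_equalityI) auto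
  then show ?thesis using assms unfolding valid_instance_def
    by (auto simp: stepI_def[of n K L] sorted_replicate)
qed

definition pairsel :: "nat \<Rightarrow> real list \<Rightarrow> nat \<times> nat" where
  "pairsel n xs = (SOME p. fst p < n \<and> snd p < n \<and> fst p \<noteq> snd p \<and> \<bar>xs ! fst p - xs ! snd p\<bar> < 1 / (real n - 2))"

definition advers :: "nat \<Rightarrow> real list \<Rightarrow> cd_instance" where
  "advers n xs = stepI n {fst (pairsel n xs), snd (pairsel n xs)} (real n)"

lemma advers_adaptive: assumes "n \<ge> 1" shows "adaptive_adversary n (advers n)"
  unfolding adaptive_adversary_def advers_def
  using assms by (auto simp: obs_stepI intro!: valid_stepI)

lemma main_bound:
  fixes xs :: "real list"
  assumes n: "n \<ge> 4" and len: "length xs = n" and rng: "\<forall>k<n. xs ! k \<in> {0..1}"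
  shows "OPT_C (advers n xs) \<ge> 1/8 * real n * cumulative (advers n xs) (\<lambda>i. xs ! i)"
proof -
  obtain a b where ab: "pairsel n xs = (a, b)" by fastforce
  have "\<exists>p. fst p < n \<and> snd p < n \<and> fst p \<noteq> snd p \<and> \<bar>xs ! fst p - xs ! snd p\<bar> < 1 / (real n - 2)"
    using pigeon[of n xs] n rng by force
  from someI_ex[OF this] have P: "a < n" "b < n" "a \<noteq> b" "\<bar>xs ! a - xs ! b\<bar> < 1 / (real n - 2)"
    using ab unfolding pairsel_def[symmetric] by auto
  define S where "S = stepI n {a, b} (real n)"
  have advS: "advers n xs = S" unfolding advers_def S_def ab by simp
  have Lpos: "real n > 0" using n by simp
  have cum: "cumulative S X = dmin S X 0 + real n * dmin S X (1 + real n)" for X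
    unfolding S_def by (rule cumulative_stepI[of a]) (use P Lpos in auto)
  have pres: "{i. present S i (1 + real n)} = {a, b}"
    using P Lpos by (auto simp: S_def present_stepI)
  have a0: "dmin S (\<lambda>i. xs ! i) 0 \<le> 1/2"
    by (rule dmin_le_half) (use rng in \<open>simp add: S_def\<close>)
  have a1: "dmin S (\<lambda>i. xs ! i) (1 + real n) \<le> \<bar>xs ! a - xs ! b\<bar>"
    by (rule dmin_le_pair) (use pres P in auto)
  have q: "1 / (real n - 2) \<le> 2 / real n"
    using n by (simp add: field_simps)
  have "real n * dmin S (\<lambda>i. xs ! i) (1 + real n) \<le> real n * (2 / real n)"
    using a1 P(4) q Lpos by (intro mult_left_mono) auto
  also have "\<dots> = 2" using Lpos by simp
  finally have alg: "cumulative S (\<lambda>i. xs ! i) \<le> 5/2" using a0 cum by simp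
  define Y where "Y i = (if i = a then 1/3 else if i = b then 2/3 else (0::real))" for i
  have Yr: "Y \<in> {X. \<forall>i < length S. X i \<in> {0..1}}" by (auto simp: Y_def)
  have "dmin S Y (1 + real n) \<ge> 1/3"
    by (rule dmin_two[OF pres P(3)]) (use P in \<open>auto simp: Y_def\<close>)
  then have "real n * (1/3) \<le> real n * dmin S Y (1 + real n)"
    using Lpos by (intro mult_left_mono) auto
  then have good: "cumulative S Y \<ge> real n / 3"
    using cum[of Y] dmin_nonneg[of S Y 0] by simp
  have bdd: "bdd_above (cumulative S ` {X. \<forall>i < length S. X i \<in> {0..1}})"
  proof (rule bdd_aboveI2)
    fix X :: "nat \<Rightarrow> real" assume X: "X \<in> {X. \<forall>i < length S. X i \<in> {0..1}}"
    have "dmin S X 0 \<le> 1/2" "dmin S X (1 + real n) \<le> 1/2"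
      using X by (simp_all only: mem_Collect_eq dmin_le_half)
    then show "cumulative S X \<le> 1/2 + real n * (1/2)"
      using cum[of X] Lpos by (smt (verit) mult_left_mono)
  qed
  have opt: "OPT_C S \<ge> real n / 3"
    unfolding OPT_C_def using cSUP_upper[OF Yr bdd] good by linarith
  have "1/8 * real n * cumulative S (\<lambda>i. xs ! i) \<le> 1/8 * real n * (5/2)"
    using alg Lpos by (intro mult_left_mono) auto
  also have "\<dots> \<le> real n / 3" using Lpos by simp
  finally show ?thesis using opt advS by simp
qed

theorem claim1:
  shows "\<exists>c > 0. \<exists>N. \<forall>n \<ge> N. \<forall>\<A> :: online_alg set. \<A> \<noteq> {} \<longrightarrow> (\<forall>A \<in> \<A>. online_alg A) \<longrightarrow>
           (\<exists>Adv. adaptive_adversary n Adv \<and>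
              (\<forall>A \<in> \<A>. \<forall>xs. run n A Adv xs \<longrightarrow>
                 OPT_C (Adv xs) \<ge> c * real n * cumulative (Adv xs) (\<lambda>i. xs ! i)))"
proof (intro exI[of _ "1/8"] conjI exI[of _ "4::nat"] allI impI)
  fix n :: nat and \<A> :: "online_alg set"
  assume n: "n \<ge> 4" and alg: "\<forall>A \<in> \<A>. online_alg A"
  show "\<exists>Adv. adaptive_adversary n Adv \<and>
              (\<forall>A \<in> \<A>. \<forall>xs. run n A Adv xs \<longrightarrow>
                 OPT_C (Adv xs) \<ge> 1/8 * real n * cumulative (Adv xs) (\<lambda>i. xs ! i))"
  proof (intro exI[of _ "advers n"] conjI ballI allI impI)
    show "adaptive_adversary n (advers n)" using n by (intro advers_adaptive) simp
    fix A xs assume A: "A \<in> \<A>" and r: "run n A (advers n) xs"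
    have "\<forall>k<n. xs ! k \<in> {0..1}"
    proof (intro allI impI)
      fix k assume "k < n"
      then have "xs ! k = A (obs (advers n xs) k)" using r unfolding run_def by auto
      moreover have "A (obs (advers n xs) k) \<in> {0..1}" using alg A unfolding online_alg_def by blast
      ultimately show "xs ! k \<in> {0..1}" by simp
    qed
    then show "OPT_C (advers n xs) \<ge> 1/8 * real n * cumulative (advers n xs) (\<lambda>i. xs ! i)"
      using main_bound[OF n] r unfolding run_def by auto
  qed
qed (simp)

end
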